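(* Assume problem (P$_{\mathrm{fin}}$) has an optimal solution. Then there exist an optimal solution $\{p_{k,i},\delta_{k,i}\}$ of (P$_{\mathrm{fin}}$) and nonnegative numbers $\gamma_{k,i},\epsilon_{k,i}$ with $\delta_{k,i}=\gamma_{k,i}+\epsilon_{k,i}$ such that $\{p_{k,i},\gamma_{k,i},\epsilon_{k,i}\}$ is a partially procrastinating policy.
   Context: Two-way channel with finite batteries. There are two nodes $T_1,T_2$, $N$ unit-length slots, channel gains $h_1,h_2>0$, noise powers $\sigma_1^2,\sigma_2^2>0$, efficiencies $\alpha_1,\alpha_2\in[0,1]$, harvested energies $E_{k,i}\ge0$, and battery capacities $E_k^{\max}\in(0,\infty)$. A power policy is $\{p_{k,i},\delta_{k,i}\}$. Here $p_{k,i}\ge0$ is the transmit power of $T_k$ in slot $i$, and $\delta_{k,i}\ge0$ is the energy sent from $T_k$ to $T_j$ ($j\neq k$), of which $\alpha_k\delta_{k,i}$ is received. The battery state is $$S_{k,i}=\sum_{n=1}^i(E_{k,n}-p_{k,n}+\alpha_j\delta_{j,n}-\delta_{k,n}).$$ Let $$C(p_1,p_2)=\tfrac12\log(1+h_1p_1/\sigma_2^2)+\tfrac12\log(1+h_2p_2/\sigma_1^2).$$ Problem (P$_{\mathrm{fin}}$) is to maximize $\sum_{i=1}^N C(p_{1,i},p_{2,i})$ subject to $0\le S_{k,i}\le E_k^{\max}$, $p_{k,i}\ge0$ and $\delta_{k,i}\ge0$ for all $k=1,2$ and $i=1,\dots,N$. A policy $\{p_{k,i},\gamma_{k,i},\epsilon_{k,i}\}$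 with $\gamma_{k,i},\epsilon_{k,i}\ge0$, with transfers $\delta_{k,i}=\gamma_{k,i}+\epsilon_{k,i}$ and $S_{k,i}$ computed from these $\delta_{k,i}$, is called partially procrastinating if for all $k,j\in\{1,2\}$, $j\ne k$, and $i=1,\dots,N$: - $p_{k,i}-\alpha_j\gamma_{j,i}\ge0$; - $\gamma_{1,i}\gamma_{2,i}=0$; - $\epsilon_{k,i}(E_k^{\max}-S_{k,i})=0$. *)

theory Defs
  imports Complex_Main
begin

text \<open>Nodes are indexed by k \<in> {1,2}, slots by i \<in> {1..N}.
  Node-indexed parameters are functions nat \<Rightarrow> real; policies are functions nat \<Rightarrow> nat \<Rightarrow> real
  (first argument node k, second argument slot i). Only values at k \<in> {1,2}, i \<in> {1..N}
  matter.\<close>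

definition other :: "nat \<Rightarrow> nat" where
  "other k = (if k = 1 then 2 else 1)"

text \<open>Rate function C(p1,p2); sigma k is the noise standard deviation at node k.\<close>
definition rate :: "(nat \<Rightarrow> real) \<Rightarrow> (nat \<Rightarrow> real) \<Rightarrow> real \<Rightarrow> real \<Rightarrow> real" where
  "rate h sigma p1 p2 =
     (1/2) * ln (1 + h 1 * p1 / (sigma 2)^2) + (1/2) * ln (1 + h 2 * p2 / (sigma 1)^2)"

definition battery ::
  "(nat \<Rightarrow> real) \<Rightarrow> (nat \<Rightarrow> nat \<Rightarrow> real) \<Rightarrow> (nat \<Rightarrow> nat \<Rightarrow> real) \<Rightarrow> (nat \<Rightarrow> nat \<Rightarrow> real)
     \<Rightarrow> nat \<Rightarrow> nat \<Rightarrow> real" where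
  "battery alpha E p delta k i =
     (\<Sum>n = 1..i. E k n - p k n + alpha (other k) * delta (other k) n - delta k n)"

definition feasible ::
  "nat \<Rightarrow> (nat \<Rightarrow> real) \<Rightarrow> (nat \<Rightarrow> nat \<Rightarrow> real) \<Rightarrow> (nat \<Rightarrow> real)
     \<Rightarrow> (nat \<Rightarrow> nat \<Rightarrow> real) \<Rightarrow> (nat \<Rightarrow> nat \<Rightarrow> real) \<Rightarrow> bool" where
  "feasible N alpha E Emax p delta \<longleftrightarrow>
     (\<forall>k \<in> {1,2}. \<forall>i \<in> {1..N}.
        0 \<le> battery alpha E p delta k i \<and> battery alpha E p delta k i \<le> Emax k \<and>
        0 \<le> p k i \<and> 0 \<le> delta k i)"

definition objective ::
  "nat \<Rightarrow> (nat \<Rightarrow> real) \<Rightarrow> (nat \<Rightarrow> real) \<Rightarrow> (nat \<Rightarrow> nat \<Rightarrow> real) \<Rightarrow> real" where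
  "objective N h sigma p = (\<Sum>i = 1..N. rate h sigma (p 1 i) (p 2 i))"

definition optimal ::
  "nat \<Rightarrow> (nat \<Rightarrow> real) \<Rightarrow> (nat \<Rightarrow> real) \<Rightarrow> (nat \<Rightarrow> real) \<Rightarrow> (nat \<Rightarrow> nat \<Rightarrow> real)
     \<Rightarrow> (nat \<Rightarrow> real) \<Rightarrow> (nat \<Rightarrow> nat \<Rightarrow> real) \<Rightarrow> (nat \<Rightarrow> nat \<Rightarrow> real) \<Rightarrow> bool" where
  "optimal N h sigma alpha E Emax p delta \<longleftrightarrow>
     feasible N alpha E Emax p delta \<and>
     (\<forall>p' delta'. feasible N alpha E Emax p' delta' \<longrightarrow>
        objective N h sigma p' \<le> objective N h sigma p)"

definition partially_procrastinating ::
  "nat \<Rightarrow> (nat \<Rightarrow> real) \<Rightarrow> (nat \<Rightarrow> nat \<Rightarrow> real) \<Rightarrow> (nat \<Rightarrow> real)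
     \<Rightarrow> (nat \<Rightarrow> nat \<Rightarrow> real) \<Rightarrow> (nat \<Rightarrow> nat \<Rightarrow> real) \<Rightarrow> (nat \<Rightarrow> nat \<Rightarrow> real) \<Rightarrow> bool" where
  "partially_procrastinating N alpha E Emax p gamma eps \<longleftrightarrow>
     (\<forall>k \<in> {1,2}. \<forall>i \<in> {1..N}.
        0 \<le> gamma k i \<and> 0 \<le> eps k i \<and>
        p k i - alpha (other k) * gamma (other k) i \<ge> 0 \<and>
        gamma 1 i * gamma 2 i = 0 \<and>
        eps k i * (Emax k - battery alpha E p (\<lambda>k' i'. gamma k' i' + eps k' i') k i) = 0)"

end

theory Submission
  imports Defs
begin

definition gvec :: "real \<Rightarrow> real \<Rightarrow> real \<Rightarrow> real \<Rightarrow> real \<times> real" where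
  "gvec a1 a2 y1 y2 = (if y2 < 0 then -y2/a1 else 0, if y1 < 0 then -y1/a2 else 0)"

definition evec :: "real \<Rightarrow> real \<Rightarrow> real \<Rightarrow> real \<Rightarrow> real \<Rightarrow> real \<Rightarrow> real \<times> real" where
  "evec a1 a2 M1 M2 u1 u2 =
    (if u1 - M1 \<le> 0 \<and> u2 - M2 \<le> 0 then (0,0)
     else if u1 - M1 > 0 \<and> (u2 - M2) + a1*(u1-M1) \<le> 0 then (u1 - M1, 0)
     else if u2 - M2 > 0 \<and> (u1 - M1) + a2*(u2-M2) \<le> 0 then (0, u2 - M2)
     else (((u1-M1) + a2*(u2-M2))/(1-a1*a2), ((u2-M2) + a1*(u1-M1))/(1-a1*a2)))"

lemma aax: fixes a b x :: real
  assumes "0\<le>a" "a\<le>1" "0\<le>b" "b\<le>1" "0\<le>x" shows "a*(b*x) \<le> x"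
proof -
  have "b*x \<le> x" using assms by (simp add: mult_left_le_one_le)
  moreover have "a*(b*x) \<le> b*x" using assms by (simp add: mult_left_le_one_le)
  ultimately show ?thesis by linarith
qed

lemma partA:
  fixes a1 a2 y1 y2 z1 z2 s1 s2 :: real
  assumes "0\<le>a1" "a1\<le>1" "0\<le>a2" "a2\<le>1" "0\<le>z1" "0\<le>z2" "0\<le>s1" "0\<le>s2"
    "y1 - z1 + a2*z2 \<ge> s1" "y2 - z2 + a1*z1 \<ge> s2"
    and g: "gvec a1 a2 y1 y2 = (g1, g2)"
    and u1: "u1 = y1 - g1 + a2*g2" and u2: "u2 = y2 - g2 + a1*g1"
  shows "0 \<le> g1 \<and> 0 \<le> g2 \<and> g1*g2 = 0 \<and> a2*g2 \<le> max 0 (-y1) \<and> a1*g1 \<le> max 0 (-y2)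
    \<and> 0 \<le> u1 \<and> 0 \<le> u2
    \<and> (\<exists>w1 w2. 0\<le>w1 \<and> 0\<le>w2 \<and> u1 - w1 + a2*w2 \<ge> s1 \<and> u2 - w2 + a1*w1 \<ge> s2)
    \<and> (a1 = 1 \<and> a2 = 1 \<longrightarrow> u1+u2 = y1+y2)"
proof -
  have h1: "a1*a2*z1 \<le> z1" using assms aax by (metis mult.assoc)
  have h2: "a1*a2*z2 \<le> z2" using assms aax by (metis mult.assoc)
  have notboth: "\<not> (y1 < 0 \<and> y2 < 0)"
  proof
    assume "y1 < 0 \<and> y2 < 0"
    have e1: "a2*(y2 - z2 + a1*z1) \<ge> a2*s2" using assms by (simp add: mult_left_mono)
    have e2: "a2*(y2 - z2 + a1*z1) = a2*y2 - a2*z2 + a1*a2*z1" by (simp add: algebra_simps)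
    have e3: "a2*s2 \<ge> 0" using assms by simp
    have "y1 + a2*y2 \<ge> 0" using e1 e2 e3 h1 assms(9) assms(7) by linarith
    moreover have "a2*y2 \<le> 0" using \<open>y1<0 \<and> y2<0\<close> assms by (simp add: mult_nonneg_nonpos)
    ultimately show False using \<open>y1<0 \<and> y2<0\<close> by linarith
  qed
  show ?thesis
  proof (cases "y1 < 0")
    case True
    hence y2: "\<not> y2 < 0" using notboth by blast
    have a2p: "a2 > 0"
    proof (rule ccontr)
      assume "\<not> a2 > 0" hence "a2 = 0" using assms by simp
      thus False using assms True by simp
    qed
    have gg: "g1 = 0" "g2 = -y1/a2" using g True y2 unfolding gvec_def by auto
    have ag2: "a2*g2 = -y1" using gg a2p by simp
    have "a2*z2 \<ge> -y1" using assms True by linarith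
    hence z2g: "z2 \<ge> g2" using ag2 a2p by (smt (verit) mult_le_cancel_left_pos)
    have U1: "u1 = 0" using u1 gg ag2 by simp
    define w1 where "w1 = z1"
    define w2 where "w2 = z2 - g2"
    have d1: "u1 - w1 + a2*w2 \<ge> s1" using assms u1 gg unfolding w1_def w2_def by (simp add: algebra_simps)
    have d2: "u2 - w2 + a1*w1 \<ge> s2" using assms u2 gg unfolding w1_def w2_def by (simp add: algebra_simps)
    have w0: "0 \<le> w1" "0 \<le> w2" using assms z2g unfolding w1_def w2_def by auto
    have "w1 \<le> a2*w2" using d1 U1 assms by linarith
    hence "a1*w1 \<le> a1*(a2*w2)" using assms by (simp add: mult_left_mono)
    moreover have "a1*(a2*w2) \<le> w2" using assms w0 aax by blast
    ultimately have "u2 \<ge> 0" using d2 assms by linarith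
    moreover have "0 \<le> g2" using gg a2p True by (simp add: divide_nonpos_pos)
    ultimately show ?thesis using gg ag2 U1 d1 d2 w0 u2 by auto
  next
    case False
    show ?thesis
    proof (cases "y2 < 0")
      case True
      have a1p: "a1 > 0"
      proof (rule ccontr)
        assume "\<not> a1 > 0" hence "a1 = 0" using assms by simp
        thus False using assms True by simp
      qed
      have gg: "g2 = 0" "g1 = -y2/a1" using g True False unfolding gvec_def by auto
      have ag1: "a1*g1 = -y2" using gg a1p by simp
      have "a1*z1 \<ge> -y2" using assms True by linarith
      hence z1g: "z1 \<ge> g1" using ag1 a1p by (smt (verit) mult_le_cancel_left_pos)
      have U2: "u2 = 0" using u2 gg ag1 by simp
      define w1 where "w1 = z1 - g1"
      define w2 where "w2 = z2"
      have d1: "u1 - w1 + a2*w2 \<ge> s1" using assms u1 gg unfolding w1_def w2_def by (simp add: algebra_simps)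
      have d2: "u2 - w2 + a1*w1 \<ge> s2" using assms u2 gg unfolding w1_def w2_def by (simp add: algebra_simps)
      have w0: "0 \<le> w1" "0 \<le> w2" using assms z1g unfolding w1_def w2_def by auto
      have "w2 \<le> a1*w1" using d2 U2 assms by linarith
      hence "a2*w2 \<le> a2*(a1*w1)" using assms by (simp add: mult_left_mono)
      moreover have "a2*(a1*w1) \<le> w1" using assms w0 aax by blast
      ultimately have "u1 \<ge> 0" using d1 assms by linarith
      moreover have "0 \<le> g1" using gg a1p True by (simp add: divide_nonpos_pos)
      ultimately show ?thesis using gg ag1 U2 d1 d2 w0 u1 by auto
    next
      case F2: False
      have gg: "g1 = 0" "g2 = 0" using g False F2 unfolding gvec_def by auto
      show ?thesis using gg u1 u2 assms False F2 by auto
    qed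
  qed
qed

lemma one_case: fixes a b :: real assumes "0\<le>a" "a\<le>1" "0\<le>b" "b\<le>1" "\<not> a*b < 1"
  shows "a = 1 \<and> b = 1"
proof -
  have "a*b \<le> a" using assms by (simp add: mult_left_le)
  moreover have "a*b \<le> b" using assms by (simp add: mult_left_le_one_le)
  ultimately show ?thesis using assms by linarith
qed

lemma partB:
  fixes a1 a2 u1 u2 s1 s2 w1 w2 M1 M2 :: real
  assumes a: "0\<le>a1" "a1\<le>1" "0\<le>a2" "a2\<le>1"
    and u: "0\<le>u1" "0\<le>u2" and s: "0\<le>s1" "s1\<le>M1" "0\<le>s2" "s2\<le>M2"
    and w: "0\<le>w1" "0\<le>w2" "u1 - w1 + a2*w2 \<ge> s1" "u2 - w2 + a1*w1 \<ge> s2"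
    and cons: "a1=1\<and>a2=1 \<longrightarrow> u1+u2 = s1+s2"
    and e: "evec a1 a2 M1 M2 u1 u2 = (e1,e2)"
    and T1: "T1 = u1 - e1 + a2*e2" and T2: "T2 = u2 - e2 + a1*e1"
  shows "0\<le>e1 \<and> 0\<le>e2 \<and> 0\<le>T1 \<and> T1\<le>M1 \<and> 0\<le>T2 \<and> T2\<le>M2 \<and> e1*(M1-T1)=0 \<and> e2*(M2-T2)=0
    \<and> (\<exists>v1 v2. 0\<le>v1 \<and> 0\<le>v2 \<and> T1 - v1 + a2*v2 \<ge> s1 \<and> T2 - v2 + a1*v1 \<ge> s2)
    \<and> (a1=1\<and>a2=1 \<longrightarrow> T1+T2 = u1+u2)"
proof -
  define A where "A = u1 - M1"
  define B where "B = u2 - M2"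
  show ?thesis
  proof (cases "A \<le> 0 \<and> B \<le> 0")
    case True
    hence "e1 = 0" "e2 = 0" using e unfolding evec_def A_def B_def by auto
    thus ?thesis using True T1 T2 u w unfolding A_def B_def by auto
  next
    case C1: False
    show ?thesis
    proof (cases "A > 0 \<and> B + a1*A \<le> 0")
      case True
      hence ee: "e1 = A" "e2 = 0" using e C1 unfolding evec_def A_def B_def by auto
      have t1: "T1 = M1" using T1 ee A_def by simp
      have t2: "T2 = u2 + a1*A" using T2 ee by simp
      have "a1*A \<ge> 0" using True a by simp
      hence t2p: "0 \<le> T2" using t2 u by linarith
      have t2m: "T2 \<le> M2" using t2 True B_def by linarith
      have dom: "\<exists>v1 v2. 0\<le>v1 \<and> 0\<le>v2 \<and> T1 - v1 + a2*v2 \<ge> s1 \<and> T2 - v2 + a1*v1 \<ge> s2"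
      proof (cases "w1 \<ge> A")
        case True
        have "T1 - (w1 - A) + a2*w2 \<ge> s1" using t1 w A_def by simp
        moreover have "T2 - w2 + a1*(w1-A) \<ge> s2" using t2 w by (simp add: algebra_simps)
        ultimately show ?thesis using True w by (intro exI[of _ "w1-A"] exI[of _ w2]) auto
      next
        case False
        have "a2*w2 \<ge> 0" using a w by simp
        hence "T1 - 0 + a2*w2 \<ge> s1" using t1 s by linarith
        moreover have "a1*w1 \<le> a1*A" using False a by (simp add: mult_left_mono)
        hence "T2 - w2 + a1*0 \<ge> s2" using t2 w by linarith
        ultimately show ?thesis using w by (intro exI[of _ 0] exI[of _ w2]) auto
      qed
      have "a1 = 1 \<and> a2 = 1 \<longrightarrow> T1+T2 = u1+u2" using T1 T2 ee by auto
      thus ?thesis using ee t1 t2p t2m dom True s by auto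
    next
      case C2: False
      show ?thesis
      proof (cases "B > 0 \<and> A + a2*B \<le> 0")
        case True
        hence ee: "e1 = 0" "e2 = B" using e C1 C2 unfolding evec_def A_def B_def by auto
        have t2: "T2 = M2" using T2 ee B_def by simp
        have t1: "T1 = u1 + a2*B" using T1 ee by simp
        have "a2*B \<ge> 0" using True a by simp
        hence t1p: "0 \<le> T1" using t1 u by linarith
        have t1m: "T1 \<le> M1" using t1 True A_def by linarith
        have dom: "\<exists>v1 v2. 0\<le>v1 \<and> 0\<le>v2 \<and> T1 - v1 + a2*v2 \<ge> s1 \<and> T2 - v2 + a1*v1 \<ge> s2"
        proof (cases "w2 \<ge> B")
          case True
          have "T2 - (w2 - B) + a1*w1 \<ge> s2" using t2 w B_def by simp
          moreover have "T1 - w1 + a2*(w2-B) \<ge> s1" using t1 w by (simp add: algebra_simps)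
          ultimately show ?thesis using True w by (intro exI[of _ w1] exI[of _ "w2-B"]) auto
        next
          case False
          have "a1*w1 \<ge> 0" using a w by simp
          hence "T2 - 0 + a1*w1 \<ge> s2" using t2 s by linarith
          moreover have "a2*w2 \<le> a2*B" using False a by (simp add: mult_left_mono)
          hence "T1 - w1 + a2*0 \<ge> s1" using t1 w by linarith
          ultimately show ?thesis using w by (intro exI[of _ w1] exI[of _ 0]) auto
        qed
        have "a1 = 1 \<and> a2 = 1 \<longrightarrow> T1+T2 = u1+u2" using T1 T2 ee by auto
        thus ?thesis using ee t2 t1p t1m dom True s by auto
      next
        case C3: False
        have ee: "e1 = (A + a2*B)/(1-a1*a2)" "e2 = (B + a1*A)/(1-a1*a2)"
          using e C1 C2 C3 unfolding evec_def A_def B_def by auto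
        have D: "a1*a2 < 1"
        proof (rule ccontr)
          assume "\<not> a1*a2 < 1"
          hence "a1 = 1 \<and> a2 = 1" using one_case a by blast
          hence "A + B \<le> 0" using cons s A_def B_def by auto
          thus False using C1 C2 C3 \<open>a1 = 1 \<and> a2 = 1\<close> by auto
        qed
        have n1: "A + a2*B \<ge> 0"
        proof (cases "A > 0")
          case True
          hence "B + a1*A > 0" using C2 by auto
          hence "a2*(B + a1*A) \<ge> 0" using a by simp
          moreover have "a2*(a1*A) \<le> A" using aax a True by simp
          ultimately show ?thesis by (simp add: algebra_simps)
        next
          case False
          hence "B > 0" using C1 by auto
          thus ?thesis using C3 by auto
        qed
        have n2: "B + a1*A \<ge> 0"
        proof (cases "B > 0")
          case True
          hence "A + a2*B > 0" using C3 by auto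
          hence "a1*(A + a2*B) \<ge> 0" using a by simp
          moreover have "a1*(a2*B) \<le> B" using aax a True by simp
          ultimately show ?thesis by (simp add: algebra_simps)
        next
          case False
          hence "A > 0" using C1 by auto
          thus ?thesis using C2 by auto
        qed
        have Dp: "1 - a1*a2 > 0" using D by simp
        have e0: "0 \<le> e1" "0 \<le> e2" using ee n1 n2 Dp by auto
        have k1: "-e1 + a2*e2 = (-(A + a2*B) + a2*(B + a1*A))/(1-a1*a2)" unfolding ee
          by (simp add: diff_divide_distrib add_divide_distrib ring_distribs)
        have k1': "(-(A + a2*B) + a2*(B + a1*A)) = -A*(1-a1*a2)" by (simp add: algebra_simps)
        have "T1 = u1 - A" using T1 k1 k1' Dp by simp
        hence t1: "T1 = M1" using A_def by simp
        have k2: "-e2 + a1*e1 = (-(B + a1*A) + a1*(A + a2*B))/(1-a1*a2)" unfolding ee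
          by (simp add: diff_divide_distrib add_divide_distrib ring_distribs)
        have k2': "(-(B + a1*A) + a1*(A + a2*B)) = -B*(1-a1*a2)" by (simp add: algebra_simps)
        have "T2 = u2 - B" using T2 k2 k2' Dp by simp
        hence t2: "T2 = M2" using B_def by simp
        have dom: "\<exists>v1 v2. 0\<le>v1 \<and> 0\<le>v2 \<and> T1 - v1 + a2*v2 \<ge> s1 \<and> T2 - v2 + a1*v1 \<ge> s2"
          using t1 t2 s by (intro exI[of _ 0] exI[of _ 0]) auto
        show ?thesis using e0 t1 t2 dom s D by auto
      qed
    qed
  qed
qed

lemma stepL:
  fixes a1 a2 t1 t2 E1 E2 p1 p2 S1p S2p d1 d2 w1 w2 S1 S2 M1 M2 :: real
  assumes a: "0\<le>a1" "a1\<le>1" "0\<le>a2" "a2\<le>1"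
    and t: "0\<le>t1" "0\<le>t2" and E: "0\<le>E1" "0\<le>E2" and p: "0\<le>p1" "0\<le>p2"
    and d: "0\<le>d1" "0\<le>d2" and w: "0\<le>w1" "0\<le>w2"
    and dom: "t1 - w1 + a2*w2 \<ge> S1p" "t2 - w2 + a1*w1 \<ge> S2p"
    and cons: "a1=1\<and>a2=1 \<longrightarrow> t1+t2 = S1p+S2p"
    and S: "S1 = S1p + (E1 - p1 + a2*d2 - d1)" "S2 = S2p + (E2 - p2 + a1*d1 - d2)"
    and Sb: "0\<le>S1" "S1\<le>M1" "0\<le>S2" "S2\<le>M2"
    and y: "y1 = t1 + E1 - p1" "y2 = t2 + E2 - p2"
    and g: "gvec a1 a2 y1 y2 = (g1,g2)"
    and u: "u1 = y1 - g1 + a2*g2" "u2 = y2 - g2 + a1*g1"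
    and e: "evec a1 a2 M1 M2 u1 u2 = (e1,e2)"
    and T: "T1 = u1 - e1 + a2*e2" "T2 = u2 - e2 + a1*e1"
  shows "0\<le>g1 \<and> 0\<le>g2 \<and> 0\<le>e1 \<and> 0\<le>e2 \<and> g1*g2 = 0 \<and> p1 - a2*g2 \<ge> 0 \<and> p2 - a1*g1 \<ge> 0
    \<and> 0\<le>T1 \<and> T1\<le>M1 \<and> 0\<le>T2 \<and> T2\<le>M2 \<and> e1*(M1-T1)=0 \<and> e2*(M2-T2)=0
    \<and> (\<exists>v1 v2. 0\<le>v1 \<and> 0\<le>v2 \<and> T1 - v1 + a2*v2 \<ge> S1 \<and> T2 - v2 + a1*v1 \<ge> S2)
    \<and> (a1=1\<and>a2=1 \<longrightarrow> T1+T2 = S1+S2)"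
proof -
  have z1: "y1 - (w1+d1) + a2*(w2+d2) \<ge> S1" using dom S y by (simp add: algebra_simps)
  have z2: "y2 - (w2+d2) + a1*(w1+d1) \<ge> S2" using dom S y by (simp add: algebra_simps)
  have A: "0 \<le> g1 \<and> 0 \<le> g2 \<and> g1*g2 = 0 \<and> a2*g2 \<le> max 0 (-y1) \<and> a1*g1 \<le> max 0 (-y2)
    \<and> 0 \<le> u1 \<and> 0 \<le> u2
    \<and> (\<exists>w1 w2. 0\<le>w1 \<and> 0\<le>w2 \<and> u1 - w1 + a2*w2 \<ge> S1 \<and> u2 - w2 + a1*w1 \<ge> S2)
    \<and> (a1 = 1 \<and> a2 = 1 \<longrightarrow> u1+u2 = y1+y2)"
    by (rule partA[OF a _ _ _ _ z1 z2 g u]) (use w d Sb in auto)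
  then obtain v1 v2 where v: "0\<le>v1" "0\<le>v2" "u1 - v1 + a2*v2 \<ge> S1" "u2 - v2 + a1*v1 \<ge> S2" by blast
  have consu: "a1=1\<and>a2=1 \<longrightarrow> u1+u2 = S1+S2" using A cons S y by auto
  have B: "0\<le>e1 \<and> 0\<le>e2 \<and> 0\<le>T1 \<and> T1\<le>M1 \<and> 0\<le>T2 \<and> T2\<le>M2 \<and> e1*(M1-T1)=0 \<and> e2*(M2-T2)=0
    \<and> (\<exists>v1 v2. 0\<le>v1 \<and> 0\<le>v2 \<and> T1 - v1 + a2*v2 \<ge> S1 \<and> T2 - v2 + a1*v1 \<ge> S2)
    \<and> (a1=1\<and>a2=1 \<longrightarrow> T1+T2 = u1+u2)"
    by (rule partB[OF a _ _ Sb v consu e T]) (use A in auto)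
  have pp: "p1 - a2*g2 \<ge> 0" "p2 - a1*g1 \<ge> 0" using A y t E p by auto
  show ?thesis using A B pp consu by auto
qed


definition yv :: "(nat\<Rightarrow>nat\<Rightarrow>real) \<Rightarrow> (nat\<Rightarrow>nat\<Rightarrow>real) \<Rightarrow> nat \<Rightarrow> real\<times>real \<Rightarrow> real\<times>real" where
  "yv E p i T = (fst T + E 1 i - p 1 i, snd T + E 2 i - p 2 i)"
definition gv :: "(nat\<Rightarrow>real) \<Rightarrow> real\<times>real \<Rightarrow> real\<times>real" where
  "gv alpha y = gvec (alpha 1) (alpha 2) (fst y) (snd y)"
definition uv :: "(nat\<Rightarrow>real) \<Rightarrow> real\<times>real \<Rightarrow> real\<times>real" where
  "uv alpha y = (fst y - fst (gv alpha y) + alpha 2 * snd (gv alpha y),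
                 snd y - snd (gv alpha y) + alpha 1 * fst (gv alpha y))"
definition ev :: "(nat\<Rightarrow>real) \<Rightarrow> (nat\<Rightarrow>real) \<Rightarrow> real\<times>real \<Rightarrow> real\<times>real" where
  "ev alpha Emax u = evec (alpha 1) (alpha 2) (Emax 1) (Emax 2) (fst u) (snd u)"
definition nx :: "(nat\<Rightarrow>real) \<Rightarrow> (nat\<Rightarrow>real) \<Rightarrow> real\<times>real \<Rightarrow> real\<times>real" where
  "nx alpha Emax u = (fst u - fst (ev alpha Emax u) + alpha 2 * snd (ev alpha Emax u),
                      snd u - snd (ev alpha Emax u) + alpha 1 * fst (ev alpha Emax u))"

primrec st :: "(nat\<Rightarrow>real) \<Rightarrow> (nat\<Rightarrow>real) \<Rightarrow> (nat\<Rightarrow>nat\<Rightarrow>real) \<Rightarrow> (nat\<Rightarrow>nat\<Rightarrow>real) \<Rightarrow> nat \<Rightarrow> real\<times>real" where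
  "st alpha Emax E p 0 = (0,0)"
| "st alpha Emax E p (Suc i) = nx alpha Emax (uv alpha (yv E p (Suc i) (st alpha Emax E p i)))"

definition comp :: "nat \<Rightarrow> real\<times>real \<Rightarrow> real" where
  "comp k x = (if k = 1 then fst x else snd x)"

definition gam where
  "gam alpha Emax E p k i = comp k (gv alpha (yv E p i (st alpha Emax E p (i-1))))"
definition eps where
  "eps alpha Emax E p k i = comp k (ev alpha Emax (uv alpha (yv E p i (st alpha Emax E p (i-1)))))"

lemma battery_0: "battery alpha E p d k 0 = 0"
  unfolding battery_def by simp

lemma battery_Suc: "battery alpha E p d k (Suc i) =
   battery alpha E p d k i + (E k (Suc i) - p k (Suc i) + alpha (other k) * d (other k) (Suc i) - d k (Suc i))"
  unfolding battery_def by (simp add: sum.cl_ivl_Suc)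

lemma battery_st:
  assumes "k \<in> {1,2}"
  shows "battery alpha E p (\<lambda>k i. gam alpha Emax E p k i + eps alpha Emax E p k i) k i
         = comp k (st alpha Emax E p i)"
proof (induction i)
  case 0 thus ?case by (simp add: battery_0 comp_def)
next
  case (Suc i)
  show ?case unfolding battery_Suc Suc using assms
    by (auto simp: gam_def eps_def comp_def other_def nx_def uv_def yv_def algebra_simps)
qed

lemma invariant:
  fixes alpha Emax :: "nat \<Rightarrow> real" and E p delta :: "nat \<Rightarrow> nat \<Rightarrow> real"
  assumes a: "0 \<le> alpha 1" "alpha 1 \<le> 1" "0 \<le> alpha 2" "alpha 2 \<le> 1"
    and En: "\<forall>k \<in> {1,2}. \<forall>i \<in> {1..N}. 0 \<le> E k i"
    and f: "feasible N alpha E Emax p delta"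
    and iN: "i \<le> N"
  shows "(let T = st alpha Emax E p i; S1 = battery alpha E p delta 1 i; S2 = battery alpha E p delta 2 i in
           0 \<le> fst T \<and> 0 \<le> snd T \<and>
           (\<exists>w1 w2. 0\<le>w1 \<and> 0\<le>w2 \<and> fst T - w1 + alpha 2 * w2 \<ge> S1 \<and> snd T - w2 + alpha 1 * w1 \<ge> S2)
           \<and> (alpha 1 = 1 \<and> alpha 2 = 1 \<longrightarrow> fst T + snd T = S1 + S2))
        \<and> (1 \<le> i \<longrightarrow>
           (let g = gv alpha (yv E p i (st alpha Emax E p (i-1)));
                e = ev alpha Emax (uv alpha (yv E p i (st alpha Emax E p (i-1))));
                T = st alpha Emax E p i in
           0 \<le> fst g \<and> 0 \<le> snd g \<and> 0 \<le> fst e \<and> 0 \<le> snd e \<and> fst g * snd g = 0 \<and>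
           p 1 i - alpha 2 * snd g \<ge> 0 \<and> p 2 i - alpha 1 * fst g \<ge> 0 \<and>
           fst e * (Emax 1 - fst T) = 0 \<and> snd e * (Emax 2 - snd T) = 0 \<and>
           fst T \<le> Emax 1 \<and> snd T \<le> Emax 2))"
  using iN
proof (induction i)
  case 0
  have "\<exists>w1 w2. 0\<le>w1 \<and> 0\<le>w2 \<and> (0::real) - w1 + alpha 2 * w2 \<ge> 0 \<and> 0 - w2 + alpha 1 * w1 \<ge> 0"
    by (intro exI[of _ 0]) simp
  thus ?case by (simp add: battery_0)
next
  case (Suc i)
  have iN: "i \<le> N" using Suc by simp
  note IH = Suc.IH[OF iN]
  define t1 where "t1 = fst (st alpha Emax E p i)"
  define t2 where "t2 = snd (st alpha Emax E p i)"
  define S1p where "S1p = battery alpha E p delta 1 i"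
  define S2p where "S2p = battery alpha E p delta 2 i"
  define S1 where "S1 = battery alpha E p delta 1 (Suc i)"
  define S2 where "S2 = battery alpha E p delta 2 (Suc i)"
  have t: "0 \<le> t1" "0 \<le> t2" using IH unfolding t1_def t2_def by (auto simp: Let_def)
  obtain w1 w2 where w: "0\<le>w1" "0\<le>w2" "t1 - w1 + alpha 2 * w2 \<ge> S1p" "t2 - w2 + alpha 1 * w1 \<ge> S2p"
    using IH unfolding t1_def t2_def S1p_def S2p_def by (auto simp: Let_def)
  have cons: "alpha 1 = 1 \<and> alpha 2 = 1 \<longrightarrow> t1 + t2 = S1p + S2p"
    using IH unfolding t1_def t2_def S1p_def S2p_def by (auto simp: Let_def)
  have SI: "Suc i \<in> {1..N}" using Suc by simp
  have fe: "0 \<le> S1" "S1 \<le> Emax 1" "0 \<le> S2" "S2 \<le> Emax 2" "0 \<le> p 1 (Suc i)" "0 \<le> p 2 (Suc i)"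
    "0 \<le> delta 1 (Suc i)" "0 \<le> delta 2 (Suc i)"
    using f SI unfolding feasible_def S1_def S2_def by auto
  have Ek: "0 \<le> E 1 (Suc i)" "0 \<le> E 2 (Suc i)" using En SI by auto
  have S: "S1 = S1p + (E 1 (Suc i) - p 1 (Suc i) + alpha 2 * delta 2 (Suc i) - delta 1 (Suc i))"
     "S2 = S2p + (E 2 (Suc i) - p 2 (Suc i) + alpha 1 * delta 1 (Suc i) - delta 2 (Suc i))"
    unfolding S1_def S2_def S1p_def S2p_def by (simp_all add: battery_Suc other_def)
  define y1 where "y1 = t1 + E 1 (Suc i) - p 1 (Suc i)"
  define y2 where "y2 = t2 + E 2 (Suc i) - p 2 (Suc i)"
  define g1 where "g1 = fst (gvec (alpha 1) (alpha 2) y1 y2)"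
  define g2 where "g2 = snd (gvec (alpha 1) (alpha 2) y1 y2)"
  define u1 where "u1 = y1 - g1 + alpha 2 * g2"
  define u2 where "u2 = y2 - g2 + alpha 1 * g1"
  define e1 where "e1 = fst (evec (alpha 1) (alpha 2) (Emax 1) (Emax 2) u1 u2)"
  define e2 where "e2 = snd (evec (alpha 1) (alpha 2) (Emax 1) (Emax 2) u1 u2)"
  define T1 where "T1 = u1 - e1 + alpha 2 * e2"
  define T2 where "T2 = u2 - e2 + alpha 1 * e1"
  have gP: "gvec (alpha 1) (alpha 2) y1 y2 = (g1, g2)" unfolding g1_def g2_def by simp
  have eP: "evec (alpha 1) (alpha 2) (Emax 1) (Emax 2) u1 u2 = (e1, e2)" unfolding e1_def e2_def by simp
  note R = stepL[OF a t Ek fe(5,6) fe(7,8) w cons S fe(1-4) y1_def y2_def gP u1_def u2_def eP T1_def T2_def]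
  have R': "0\<le>g1 \<and> 0\<le>g2 \<and> 0\<le>e1 \<and> 0\<le>e2 \<and> g1*g2 = 0 \<and> p 1 (Suc i) - alpha 2*g2 \<ge> 0 \<and> p 2 (Suc i) - alpha 1*g1 \<ge> 0
    \<and> 0\<le>T1 \<and> T1\<le>Emax 1 \<and> 0\<le>T2 \<and> T2\<le>Emax 2 \<and> e1*(Emax 1-T1)=0 \<and> e2*(Emax 2-T2)=0
    \<and> (\<exists>v1 v2. 0\<le>v1 \<and> 0\<le>v2 \<and> T1 - v1 + alpha 2*v2 \<ge> S1 \<and> T2 - v2 + alpha 1*v1 \<ge> S2)
    \<and> (alpha 1=1\<and>alpha 2=1 \<longrightarrow> T1+T2 = S1+S2)"
    using R by simp
  have yy: "yv E p (Suc i) (st alpha Emax E p i) = (y1, y2)"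
    unfolding yv_def y1_def y2_def t1_def t2_def by simp
  have gg: "gv alpha (y1, y2) = (g1, g2)" unfolding gv_def g1_def g2_def by simp
  have uu: "uv alpha (y1, y2) = (u1, u2)" unfolding uv_def gg u1_def u2_def by simp
  have ee: "ev alpha Emax (u1, u2) = (e1, e2)" unfolding ev_def e1_def e2_def by simp
  have TT: "st alpha Emax E p (Suc i) = (T1, T2)"
    by (simp add: yy uu nx_def ee T1_def T2_def)
  show ?case using R' unfolding Let_def yy gg uu ee TT diff_Suc_1 S1_def S2_def by auto
qed


theorem lemma4:
  fixes N :: nat
    and h sigma alpha Emax :: "nat \<Rightarrow> real"
    and E :: "nat \<Rightarrow> nat \<Rightarrow> real"
  assumes h_pos: "h 1 > 0" "h 2 > 0"
    and sigma_pos: "(sigma 1)^2 > 0" "(sigma 2)^2 > 0"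
    and alpha_range: "0 \<le> alpha 1" "alpha 1 \<le> 1" "0 \<le> alpha 2" "alpha 2 \<le> 1"
    and E_nonneg: "\<forall>k \<in> {1,2}. \<forall>i \<in> {1..N}. 0 \<le> E k i"
    and Emax_pos: "Emax 1 > 0" "Emax 2 > 0"
    and has_opt: "\<exists>p delta. optimal N h sigma alpha E Emax p delta"
  shows "\<exists>p delta gamma eps.
           optimal N h sigma alpha E Emax p delta \<and>
           (\<forall>k \<in> {1,2}. \<forall>i \<in> {1..N}. delta k i = gamma k i + eps k i) \<and>
           partially_procrastinating N alpha E Emax p gamma eps"
proof -
  obtain p delta where opt: "optimal N h sigma alpha E Emax p delta" using has_opt by blast
  have f: "feasible N alpha E Emax p delta" using opt unfolding optimal_def by blast
  define G where "G = gam alpha Emax E p"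
  define Ep where "Ep = eps alpha Emax E p"
  define D where "D = (\<lambda>k i. G k i + Ep k i)"
  note inv = invariant[OF alpha_range E_nonneg f]
  have bat: "\<And>k i. k \<in> {1,2} \<Longrightarrow> battery alpha E p D k i = comp k (st alpha Emax E p i)"
    unfolding D_def G_def Ep_def by (rule battery_st)
  have slot: "0 \<le> G k i \<and> 0 \<le> Ep k i \<and> p k i - alpha (other k) * G (other k) i \<ge> 0 \<and>
      G 1 i * G 2 i = 0 \<and> Ep k i * (Emax k - battery alpha E p D k i) = 0 \<and>
      0 \<le> battery alpha E p D k i \<and> battery alpha E p D k i \<le> Emax k"
    if k: "k \<in> {1,2}" and i: "i \<in> {1..N}" for k i
  proof -
    have I1: "1 \<le> i" "i \<le> N" using i by auto
    note I = inv[OF I1(2)]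
    show ?thesis using k I I1 bat[OF k, of i]
      unfolding G_def Ep_def gam_def eps_def
      by (auto simp: Let_def comp_def other_def)
  qed
  have feas: "feasible N alpha E Emax p D"
    unfolding feasible_def
  proof (intro ballI conjI)
    fix k i :: nat assume k: "k \<in> {1,2}" and i: "i \<in> {1..N}"
    note sl = slot[OF k i]
    show "0 \<le> battery alpha E p D k i" "battery alpha E p D k i \<le> Emax k" using sl by auto
    show "0 \<le> p k i" using f k i unfolding feasible_def by auto
    show "0 \<le> D k i" using sl unfolding D_def by auto
  qed
  have optD: "optimal N h sigma alpha E Emax p D"
    using opt feas unfolding optimal_def by blast
  have pp: "partially_procrastinating N alpha E Emax p G Ep"
    unfolding partially_procrastinating_def
  proof (intro ballI conjI)
    fix k i :: nat assume k: "k \<in> {1,2}" and i: "i \<in> {1..N}"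
    note sl = slot[OF k i]
    have bD: "battery alpha E p (\<lambda>k' i'. G k' i' + Ep k' i') = battery alpha E p D"
      unfolding D_def by simp
    show "0 \<le> G k i" "0 \<le> Ep k i" "p k i - alpha (other k) * G (other k) i \<ge> 0"
      "G 1 i * G 2 i = 0"
      "Ep k i * (Emax k - battery alpha E p (\<lambda>k' i'. G k' i' + Ep k' i') k i) = 0"
      using sl bD by auto
  qed
  show ?thesis using optD pp unfolding D_def by blast
qed

end
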